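(* There exists a randomized $O(k^2\log k)$-competitive online algorithm for the generalized $k$-server problem in uniform metrics; that is, there is an absolute constant $C$ such that for every $k\ge 2$ and all uniform metrics $M_1,\dots,M_k$ there is a randomized online algorithm which is $C k^2\log k$-competitive.
   Context: Generalized $k$-server problem in uniform metrics: given uniform metric spaces $M_1,\dots,M_k$, where $M_i$ has $n_i\ge 2$ points at pairwise distance $1$, server $s_i$ starts at a fixed point of $M_i$ and always stays in $M_i$. Requests arrive online as $k$-tuples $(r_1,\dots,r_k)\in\prod_i M_i$; to serve a request an algorithm moves servers so that $s_i$ is at $r_i$ for at least one $i$, before seeing the next request. The cost is the total distance traveled by all servers. A randomized online algorithm $\mathrm{ALG}$ is $\beta$-competitive if there is a constant $\gamma$ (possibly depending on $k$ but not on the request sequence) such that for every input $I$, $\mathbf{E}[\mathrm{ALG}(I)]\le \beta\cdot\mathrm{OPT}(I)+\gamma$, where $\mathrm{OPT}(I)$ is the optimal offline cost. *)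

theory Defs
  imports "HOL-Probability.Probability"
begin

text \<open>Metric M_i is modelled as the point set
  {0..<n i} with all pairwise distances 1. A configuration (and a request) is a function
  c :: nat => nat, of which only the coordinates i < k matter.\<close>

type_synonym gconf = "nat \<Rightarrow> nat"

definition valid_conf :: "nat \<Rightarrow> (nat \<Rightarrow> nat) \<Rightarrow> gconf \<Rightarrow> bool" where
  "valid_conf k n c \<longleftrightarrow> (\<forall>i<k. c i < n i)"

definition serves :: "nat \<Rightarrow> gconf \<Rightarrow> gconf \<Rightarrow> bool" where
  "serves k r c \<longleftrightarrow> (\<exists>i<k. c i = r i)"

definition cdist :: "nat \<Rightarrow> gconf \<Rightarrow> gconf \<Rightarrow> real" where
  "cdist k c c' = real (card {i. i < k \<and> c i \<noteq> c' i})"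

fun path_cost :: "nat \<Rightarrow> gconf \<Rightarrow> gconf list \<Rightarrow> real" where
  "path_cost k c [] = 0"
| "path_cost k c (c' # cs) = cdist k c c' + path_cost k c' cs"

text \<open>A randomized online algorithm (behavioural form): given the requests seen so far
  (the last one being the current request) and its own previous configurations, it chooses
  the next configuration according to a probability distribution.\<close>
type_synonym ralg = "gconf list \<Rightarrow> gconf list \<Rightarrow> gconf pmf"

definition online_alg :: "nat \<Rightarrow> (nat \<Rightarrow> nat) \<Rightarrow> ralg \<Rightarrow> bool" where
  "online_alg k n A \<longleftrightarrow>
     (\<forall>rs cs. rs \<noteq> [] \<longrightarrow> (\<forall>r\<in>set rs. valid_conf k n r) \<longrightarrow> length cs = length rs - 1 \<longrightarrow>
        (\<forall>c\<in>set_pmf (A rs cs). valid_conf k n c \<and> serves k (last rs) c))"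

primrec traj :: "ralg \<Rightarrow> gconf list \<Rightarrow> nat \<Rightarrow> gconf list pmf" where
  "traj A rs 0 = return_pmf []"
| "traj A rs (Suc t) =
     bind_pmf (traj A rs t) (\<lambda>cs. map_pmf (\<lambda>c. cs @ [c]) (A (take (Suc t) rs) cs))"

definition alg_cost :: "nat \<Rightarrow> gconf \<Rightarrow> ralg \<Rightarrow> gconf list \<Rightarrow> real" where
  "alg_cost k s0 A rs = measure_pmf.expectation (traj A rs (length rs)) (path_cost k s0)"

definition opt_cost :: "nat \<Rightarrow> (nat \<Rightarrow> nat) \<Rightarrow> gconf \<Rightarrow> gconf list \<Rightarrow> real" where
  "opt_cost k n s0 rs = Inf {path_cost k s0 cs | cs. length cs = length rs \<and>
      (\<forall>t<length rs. valid_conf k n (cs ! t) \<and> serves k (rs ! t) (cs ! t))}"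

definition competitive :: "nat \<Rightarrow> (nat \<Rightarrow> nat) \<Rightarrow> gconf \<Rightarrow> ralg \<Rightarrow> real \<Rightarrow> bool" where
  "competitive k n s0 A \<beta> \<longleftrightarrow>
     (\<exists>\<gamma>::real. \<forall>rs. (\<forall>r\<in>set rs. valid_conf k n r) \<longrightarrow>
        alg_cost k s0 A rs \<le> \<beta> * opt_cost k n s0 rs + \<gamma>)"

end

theory Submission
  imports Defs
begin


type_synonym nstate = "(nat \<times> (nat \<Rightarrow> nat)) option"

definition sstep :: "nat list \<Rightarrow> gconf \<Rightarrow> nstate \<Rightarrow> nstate" where
 "sstep p r st = (case st of None \<Rightarrow> None | Some (j, f) \<Rightarrow>
    if (\<exists>l<j. r (p!l) = f (p!l)) then Some (j, f)
    else if j < length p then Some (Suc j, f(p!j := r (p!j))) else None)"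

definition runf :: "nat list \<Rightarrow> nstate \<Rightarrow> gconf list \<Rightarrow> nstate" where
 "runf p st Q = foldl (\<lambda>st r. sstep p r st) st Q"

definition run :: "nat list \<Rightarrow> gconf list \<Rightarrow> nstate" where
 "run p Q = runf p (Some (0, \<lambda>_. 0)) Q"

definition UU :: "nat \<Rightarrow> nat list set" where
 "UU k = {p. set p = {0..<k} \<and> distinct p}"

definition alive :: "nat \<Rightarrow> gconf list \<Rightarrow> nat list set" where
 "alive k Q = {p \<in> UU k. run p Q \<noteq> None}"

definition nphase :: "nat \<Rightarrow> gconf list \<Rightarrow> gconf \<Rightarrow> gconf list" where
 "nphase k P r = (if alive k (P @ [r]) \<noteq> {} then P @ [r] else [r])"

definition phase :: "nat \<Rightarrow> gconf list \<Rightarrow> gconf list" where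
 "phase k rs = foldl (nphase k) [] rs"

definition Perms :: "nat \<Rightarrow> nat list list set" where
 "Perms k = {ol. set ol = UU k \<and> distinct ol}"

definition first :: "nat list list \<Rightarrow> nat list set \<Rightarrow> nat list" where
 "first ol A = hd (filter (\<lambda>x. x \<in> A) ol)"

definition normo :: "nat \<Rightarrow> nat list list \<Rightarrow> nat list list" where
 "normo k ol = (if ol \<in> Perms k then ol else (SOME ol. ol \<in> Perms k))"

definition occ :: "nat \<Rightarrow> nat list list \<Rightarrow> gconf list \<Rightarrow> nat list" where
 "occ k ol rs = first (normo k ol) (alive k (phase k rs))"

definition node :: "nat \<Rightarrow> nat list list \<Rightarrow> gconf list \<Rightarrow> nat \<times> (nat \<Rightarrow> nat)" where
 "node k ol rs = the (run (occ k ol rs) (phase k rs))"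

definition newc :: "nat \<Rightarrow> nat list list \<Rightarrow> gconf list \<Rightarrow> gconf \<Rightarrow> gconf" where
 "newc k ol rs c = (\<lambda>i. if i = k then to_nat ol else
     (case node k ol rs of (j, f) \<Rightarrow> if i \<in> set (take j (occ k ol rs)) then f i else c i))"

fun confr :: "nat \<Rightarrow> gconf \<Rightarrow> nat list list \<Rightarrow> gconf list \<Rightarrow> gconf" where
  "confr k s0 ol [] = s0"
| "confr k s0 ol (r # rrs) = newc k ol (rev (r # rrs)) (confr k s0 ol rrs)"

definition conf :: "nat \<Rightarrow> gconf \<Rightarrow> nat list list \<Rightarrow> gconf list \<Rightarrow> gconf" where
 "conf k s0 ol rs = confr k s0 ol (rev rs)"

definition Alg :: "nat \<Rightarrow> gconf \<Rightarrow> ralg" where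
 "Alg k s0 rs cs = (if cs = [] then map_pmf (\<lambda>ol. conf k s0 ol rs) (pmf_of_set (Perms k))
     else return_pmf (conf k s0 (from_nat (hd cs k)) rs))"

lemma conf_Nil[simp]: "conf k s0 ol [] = s0" by (simp add: conf_def)
lemma conf_snoc[simp]: "conf k s0 ol (rs @ [r]) = newc k ol (rs @ [r]) (conf k s0 ol rs)"
  by (simp add: conf_def)

lemma run_Nil[simp]: "run p [] = Some (0, \<lambda>_. 0)" by (simp add: run_def runf_def)
lemma run_snoc[simp]: "run p (Q @ [r]) = sstep p r (run p Q)" by (simp add: run_def runf_def)
lemma runf_Cons[simp]: "runf p st (r # Q) = runf p (sstep p r st) Q" by (simp add: runf_def)
lemma runf_Nil[simp]: "runf p st [] = st" by (simp add: runf_def)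

lemma phase_Nil[simp]: "phase k [] = []" by (simp add: phase_def)
lemma phase_snoc: "phase k (rs @ [r]) = nphase k (phase k rs) r" by (simp add: phase_def)

lemma sstep_None[simp]: "sstep p r None = None" by (simp add: sstep_def)

lemma UU_finite: "finite (UU k)"
proof -
  have "UU k \<subseteq> {xs. set xs \<subseteq> {0..<k} \<and> length xs = k}"
    unfolding UU_def using distinct_card by fastforce
  thus ?thesis using finite_lists_length_eq[of "{0..<k}" k] finite_subset by auto
qed

lemma UU_card: "card (UU k) \<le> k ^ k"
proof -
  have "UU k \<subseteq> {xs. set xs \<subseteq> {0..<k} \<and> length xs = k}"
    unfolding UU_def using distinct_card by fastforce
  hence "card (UU k) \<le> card {xs. set xs \<subseteq> {0..<k} \<and> length xs = k}"
    by (intro card_mono) (auto intro: finite_lists_length_eq)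
  thus ?thesis using card_lists_length_eq[of "{0..<k}" k] by simp
qed

lemma UU_len: "p \<in> UU k \<Longrightarrow> length p = k"
  unfolding UU_def using distinct_card by fastforce

lemma UU_nth: "p \<in> UU k \<Longrightarrow> l < length p \<Longrightarrow> p ! l < k"
  unfolding UU_def using nth_mem by fastforce

lemma UU_ne: "[0..<k] \<in> UU k" by (simp add: UU_def)

lemma Perms_finite: "finite (Perms k)"
proof -
  have "Perms k \<subseteq> {xs. set xs \<subseteq> UU k \<and> length xs = card (UU k)}"
    unfolding Perms_def using distinct_card by fastforce
  thus ?thesis using finite_lists_length_eq[OF UU_finite] finite_subset by blast
qed

lemma Perms_ne: "Perms k \<noteq> {}"
  using finite_distinct_list[OF UU_finite[of k]] unfolding Perms_def by auto

lemma normo_Perms: "normo k ol \<in> Perms k"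
  unfolding normo_def using Perms_ne some_in_eq by (auto)

lemma first_mem: "A \<inter> set ol \<noteq> {} \<Longrightarrow> first ol A \<in> A \<inter> set ol"
proof -
  assume "A \<inter> set ol \<noteq> {}"
  hence "filter (\<lambda>x. x \<in> A) ol \<noteq> []" by (auto simp: filter_empty_conv)
  hence "hd (filter (\<lambda>x. x \<in> A) ol) \<in> set (filter (\<lambda>x. x \<in> A) ol)" by (rule hd_in_set)
  thus ?thesis unfolding first_def set_filter by blast
qed

lemma first_sub: "B \<subseteq> A \<Longrightarrow> first ol A \<in> B \<Longrightarrow> first ol B = first ol A"
proof (induction ol)
  case Nil thus ?case by (simp add: first_def)
next
  case (Cons x xs)
  show ?case
  proof (cases "x \<in> A")
    case True
    then have "first (x#xs) A = x" by (simp add: first_def)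
    with Cons.prems have "x \<in> B" by simp
    then show ?thesis using True by (simp add: first_def)
  next
    case False
    then have "x \<notin> B" using Cons.prems by auto
    then show ?thesis using False Cons by (simp add: first_def)
  qed
qed

lemma alive_sub: "alive k (Q @ [r]) \<subseteq> alive k Q"
  unfolding alive_def by (auto, case_tac "run x Q", auto)

lemma run_single: "run p [r] = sstep p r (Some (0, \<lambda>_. 0))" by (simp add: run_def runf_def)

lemma alive_single: "k \<ge> 1 \<Longrightarrow> alive k [r] = UU k"
proof -
  assume k: "k \<ge> 1"
  have "run p [r] \<noteq> None" if "p \<in> UU k" for p
    using UU_len[OF that] k by (auto simp: sstep_def run_single)
  thus ?thesis unfolding alive_def by auto
qed

lemma alive_phase_ne: "k \<ge> 1 \<Longrightarrow> alive k (phase k rs) \<noteq> {}"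
proof (induction rs rule: rev_induct)
  case Nil thus ?case using UU_ne[of k] by (auto simp: alive_def)
next
  case (snoc r rs) thus ?case using alive_single[of k r] UU_ne[of k]
    by (auto simp: phase_snoc nphase_def)
qed

lemma occ_alive: "k \<ge> 1 \<Longrightarrow> occ k ol rs \<in> alive k (phase k rs)"
proof -
  assume k: "k \<ge> 1"
  have "alive k (phase k rs) \<subseteq> set (normo k ol)"
    using normo_Perms[of k ol] by (auto simp: Perms_def alive_def)
  moreover have "alive k (phase k rs) \<noteq> {}" using alive_phase_ne[OF k] .
  ultimately have "alive k (phase k rs) \<inter> set (normo k ol) \<noteq> {}" by blast
  then show ?thesis using first_mem[of "alive k (phase k rs)" "normo k ol"]
    unfolding occ_def by blast
qed

lemma sstep_len: "sstep p r st = Some (j', f') \<Longrightarrow> (\<And>j f. st = Some (j, f) \<Longrightarrow> j \<le> length p) \<Longrightarrow> j' \<le> length p"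
  by (cases st) (auto simp: sstep_def split: if_splits)

lemma run_len: "run p Q = Some (j, f) \<Longrightarrow> j \<le> length p"
proof (induction Q arbitrary: j f rule: rev_induct)
  case Nil thus ?case by simp
next
  case (snoc r Q)
  thus ?case using sstep_len[of p r "run p Q" j f] by simp
qed



lemma take_nth_eq: "take n \<pi> = p \<Longrightarrow> l < n \<Longrightarrow> l < length \<pi> \<Longrightarrow> \<pi> ! l = p ! l"
  by auto

lemma ex_alive_gen:
  assumes "\<forall>q\<in>set Q. serves k q x" "distinct p" "set p \<subseteq> {0..<k}" "\<forall>i\<in>set p. f i = x i"
  shows "\<exists>\<pi>\<in>UU k. take (length p) \<pi> = p \<and> runf \<pi> (Some (length p, f)) Q \<noteq> None"
  using assms
proof (induction Q arbitrary: p f)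
  case Nil
  let ?\<pi> = "p @ filter (\<lambda>i. i \<notin> set p) [0..<k]"
  have "?\<pi> \<in> UU k" using Nil.prems by (auto simp: UU_def)
  then show ?case by (intro bexI[of _ ?\<pi>]) auto
next
  case (Cons r Q)
  show ?case
  proof (cases "\<exists>l<length p. r (p!l) = f (p!l)")
    case True
    from Cons.IH[of p f] Cons.prems obtain \<pi> where \<pi>: "\<pi> \<in> UU k" "take (length p) \<pi> = p"
      "runf \<pi> (Some (length p, f)) Q \<noteq> None" by auto
    have "min (length p) (length \<pi>) = length p" using arg_cong[OF \<pi>(2), of length] by simp
    then have lp: "length p \<le> length \<pi>" by linarith
    have "\<exists>l<length p. r (\<pi>!l) = f (\<pi>!l)"
      using True \<pi>(2) by (metis nth_take)
    then have "sstep \<pi> r (Some (length p, f)) = Some (length p, f)" by (simp add: sstep_def)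
    then show ?thesis using \<pi> by auto
  next
    case False
    from Cons.prems(1) obtain i where i: "i < k" "x i = r i" by (auto simp: serves_def)
    have inp: "i \<notin> set p"
    proof
      assume "i \<in> set p"
      then obtain l where "l < length p" "p ! l = i" by (auto simp: in_set_conv_nth)
      then show False using False Cons.prems(4) i by (metis nth_mem)
    qed
    let ?p = "p @ [i]" and ?f = "f(i := r i)"
    have "\<forall>q\<in>set Q. serves k q x" "distinct ?p" "set ?p \<subseteq> {0..<k}" "\<forall>i'\<in>set ?p. ?f i' = x i'"
      using Cons.prems inp i by auto
    from Cons.IH[OF this] obtain \<pi> where \<pi>0: "\<pi> \<in> UU k" "take (length ?p) \<pi> = ?p"
      "runf \<pi> (Some (length ?p, ?f)) Q \<noteq> None" by blast
    have \<pi>: "\<pi> \<in> UU k" "take (Suc (length p)) \<pi> = p @ [i]"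
      "runf \<pi> (Some (Suc (length p), ?f)) Q \<noteq> None" using \<pi>0 by auto
    have "min (Suc (length p)) (length \<pi>) = Suc (length p)"
      using arg_cong[OF \<pi>(2), of length] by simp
    then have lp: "length p < length \<pi>" by linarith
    have "take (length p) \<pi> = take (length p) (take (Suc (length p)) \<pi>)" by simp
    also have "\<dots> = p" using \<pi>(2) by simp
    finally have tp: "take (length p) \<pi> = p" .
    have "\<pi> ! length p = (take (Suc (length p)) \<pi>) ! length p" by simp
    then have pi: "\<pi> ! length p = i" using \<pi>(2) by simp
    have "\<not> (\<exists>l<length p. r (\<pi>!l) = f (\<pi>!l))"
      using False tp lp by (metis nth_take)
    then have "sstep \<pi> r (Some (length p, f)) = Some (Suc (length p), ?f)"
      using lp pi by (simp add: sstep_def)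
    then show ?thesis using \<pi> tp by auto
  qed
qed

lemma ex_alive:
  assumes "\<forall>q\<in>set Q. serves k q x"
  shows "alive k Q \<noteq> {}"
  using ex_alive_gen[OF assms, of "[]" "\<lambda>_. 0"] unfolding alive_def run_def by auto



lemma conf_k: "rs \<noteq> [] \<Longrightarrow> conf k s0 ol rs k = to_nat ol"
  by (cases rs rule: rev_exhaust) (auto simp: newc_def)

lemma node_run: "k \<ge> 1 \<Longrightarrow> run (occ k ol rs) (phase k rs) = Some (node k ol rs)"
  using occ_alive[of k ol rs] unfolding alive_def node_def by auto

lemma run_valid:
  "(\<forall>q\<in>set Q. valid_conf k n q) \<Longrightarrow> run p Q = Some (j, f) \<Longrightarrow> i \<in> set (take j p) \<Longrightarrow> i < k \<Longrightarrow> f i < n i"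
proof (induction Q arbitrary: j f rule: rev_induct)
  case Nil thus ?case by simp
next
  case (snoc r Q)
  from snoc.prems(2) obtain j0 f0 where r0: "run p Q = Some (j0, f0)"
    by (cases "run p Q") auto
  have jl: "j0 \<le> length p" using run_len[OF r0] .
  show ?case
  proof (cases "\<exists>l<j0. r (p!l) = f0 (p!l)")
    case True
    then have "j = j0" "f = f0" using snoc.prems(2) r0 by (auto simp: sstep_def)
    then show ?thesis using snoc r0 by auto
  next
    case False
    then have jj: "j0 < length p" "j = Suc j0" "f = f0(p!j0 := r (p!j0))"
      using snoc.prems(2) r0 by (auto simp: sstep_def split: if_splits)
    have st: "set (take j p) = insert (p!j0) (set (take j0 p))"
      using jj by (simp add: take_Suc_conv_app_nth)
    show ?thesis
    proof (cases "i = p ! j0")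
      case True
      then show ?thesis using jj snoc.prems by (auto simp: valid_conf_def)
    next
      case False
      then show ?thesis using jj st snoc r0 by auto
    qed
  qed
qed

lemma phase_snoc_cases: "phase k (rs @ [r]) = phase k rs @ [r] \<or> phase k (rs @ [r]) = [r]"
  by (simp add: phase_snoc nphase_def)

lemma phase_set: "set (phase k rs) \<subseteq> set rs"
proof (induction rs rule: rev_induct)
  case Nil thus ?case by simp
next
  case (snoc r rs) thus ?case using phase_snoc_cases[of k rs r] by auto
qed

lemma conf_valid:
  assumes "k \<ge> 1" "valid_conf k n s0" "\<forall>r\<in>set rs. valid_conf k n r"
  shows "valid_conf k n (conf k s0 ol rs)"
  using assms(3)
proof (induction rs rule: rev_induct)
  case Nil thus ?case using assms(2) by simp
next
  case (snoc r rs)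
  obtain j f where nd: "node k ol (rs @ [r]) = (j, f)" by (cases "node k ol (rs @ [r])")
  have rr: "run (occ k ol (rs @ [r])) (phase k (rs @ [r])) = Some (j, f)"
    using node_run[OF assms(1)] nd by simp
  have vq: "\<forall>q\<in>set (phase k (rs @ [r])). valid_conf k n q"
    using phase_set[of k "rs @ [r]"] snoc.prems by auto
  have ih: "valid_conf k n (conf k s0 ol rs)" using snoc by auto
  show ?case unfolding valid_conf_def
  proof (intro allI impI)
    fix i assume i: "i < k"
    show "conf k s0 ol (rs @ [r]) i < n i"
    proof (cases "i \<in> set (take j (occ k ol (rs @ [r])))")
      case True
      then show ?thesis using run_valid[OF vq rr True i] i nd by (simp add: newc_def)
    next
      case False
      then show ?thesis using ih i nd by (simp add: newc_def valid_conf_def)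
    qed
  qed
qed

lemma sstep_serves: "sstep p r st = Some (j', f') \<Longrightarrow> \<exists>l<j'. f' (p!l) = r (p!l)"
proof (cases st)
  case None
  then show "sstep p r st = Some (j', f') \<Longrightarrow> ?thesis" by simp
next
  case (Some a)
  obtain j f where a: "a = (j, f)" by (cases a)
  assume h: "sstep p r st = Some (j', f')"
  show ?thesis
  proof (cases "\<exists>l<j. r (p!l) = f (p!l)")
    case True
    then show ?thesis using h Some a by (auto simp: sstep_def)
  next
    case False
    then have "j' = Suc j" "f' = f(p!j := r (p!j))" using h Some a by (auto simp: sstep_def split: if_splits)
    then show ?thesis by (intro exI[of _ j]) auto
  qed
qed

lemma conf_serves:
  assumes "k \<ge> 1"
  shows "serves k r (conf k s0 ol (rs @ [r]))"
proof -
  let ?s = "occ k ol (rs @ [r])"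
  obtain j f where nd: "node k ol (rs @ [r]) = (j, f)" by (cases "node k ol (rs @ [r])")
  have rr: "run ?s (phase k (rs @ [r])) = Some (j, f)"
    using node_run[OF assms(1)] nd by simp
  obtain Q where "phase k (rs @ [r]) = Q @ [r]"
    using phase_snoc_cases[of k rs r] by (metis append_Nil)
  then have "sstep ?s r (run ?s Q) = Some (j, f)" using rr by simp
  then obtain l where l: "l < j" "f (?s ! l) = r (?s ! l)" using sstep_serves by blast
  have sU: "?s \<in> UU k" using occ_alive[OF assms] unfolding alive_def by auto
  have jl: "j \<le> length ?s" using run_len[OF rr] .
  have lk: "?s ! l < k" using UU_nth[OF sU] l jl by auto
  have "?s ! l \<in> set (take j ?s)" using l jl by (simp add: in_set_conv_nth) (metis nth_take)
  then have "conf k s0 ol (rs @ [r]) (?s ! l) = r (?s ! l)"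
    using l lk nd by (simp add: newc_def)
  then show ?thesis using lk unfolding serves_def by blast
qed

lemma Alg_online:
  assumes "k \<ge> 1" "valid_conf k n s0"
  shows "online_alg k n (Alg k s0)"
  unfolding online_alg_def
proof (intro allI impI ballI)
  fix rs cs c
  assume ne: "rs \<noteq> []" and v: "\<forall>r\<in>set rs. valid_conf k n r" and c: "c \<in> set_pmf (Alg k s0 rs cs)"
  from c obtain ol where c': "c = conf k s0 ol rs"
    using Perms_finite Perms_ne by (auto simp: Alg_def split: if_splits)
  obtain rs0 r where rs: "rs = rs0 @ [r]" using ne by (cases rs rule: rev_exhaust) auto
  show "valid_conf k n c \<and> serves k (last rs) c"
    using conf_valid[OF assms v] conf_serves[OF assms(1)] c' rs by auto
qed

lemma traj_Alg:
  "t \<le> length rs \<Longrightarrow> traj (Alg k s0) rs t =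
     map_pmf (\<lambda>ol. map (\<lambda>j. conf k s0 ol (take (Suc j) rs)) [0..<t]) (pmf_of_set (Perms k))"
proof (induction t)
  case 0 thus ?case by (simp add: map_pmf_def)
next
  case (Suc t)
  have ih: "traj (Alg k s0) rs t =
     map_pmf (\<lambda>ol. map (\<lambda>j. conf k s0 ol (take (Suc j) rs)) [0..<t]) (pmf_of_set (Perms k))"
    using Suc by simp
  show ?case
  proof (cases t)
    case 0
    then show ?thesis using ih
      by (simp add: bind_map_pmf Alg_def map_pmf_def bind_assoc_pmf bind_return_pmf)
  next
    case (Suc t')
    have ne: "take (Suc 0) rs \<noteq> []" using Suc.prems by (cases rs) auto
    have "Alg k s0 (take (Suc t) rs) (map (\<lambda>j. conf k s0 ol (take (Suc j) rs)) [0..<t])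
        = return_pmf (conf k s0 ol (take (Suc t) rs))" for ol
    proof -
      have u: "[0..<t] = 0 # [1..<t]" using Suc by (simp add: upt_conv_Cons)
      have "hd (map (\<lambda>j. conf k s0 ol (take (Suc j) rs)) [0..<t]) k = to_nat ol"
        unfolding u using conf_k[OF ne, of k s0 ol] by simp
      then show ?thesis using u by (simp add: Alg_def)
    qed
    then show ?thesis using ih
      by (simp add: bind_map_pmf map_pmf_def bind_return_pmf bind_assoc_pmf)
  qed
qed



definition Phi :: "nat \<Rightarrow> nat list list \<Rightarrow> gconf list \<Rightarrow> real" where
  "Phi k ol rs = real (fst (node k ol rs))"

definition Ev :: "nat \<Rightarrow> nat list list \<Rightarrow> gconf list \<Rightarrow> gconf \<Rightarrow> bool" where
  "Ev k ol rs r \<longleftrightarrow> rs = [] \<or> alive k (phase k rs @ [r]) = {} \<or> occ k ol (rs @ [r]) \<noteq> occ k ol rs"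

lemma occ_UU: "k \<ge> 1 \<Longrightarrow> occ k ol rs \<in> UU k"
  using occ_alive[of k ol rs] unfolding alive_def by auto

lemma Phi_bounds: "k \<ge> 1 \<Longrightarrow> 0 \<le> Phi k ol rs \<and> Phi k ol rs \<le> k"
proof -
  assume k: "k \<ge> 1"
  obtain j f where nd: "node k ol rs = (j, f)" by (cases "node k ol rs")
  have "j \<le> length (occ k ol rs)" using run_len node_run[OF k, of ol rs] nd by simp
  then have "j \<le> k" using UU_len[OF occ_UU[OF k]] by simp
  then show ?thesis using nd by (simp add: Phi_def)
qed

lemma cdist_le: "cdist k c c' \<le> k"
proof -
  have "card {i. i < k \<and> c i \<noteq> c' i} \<le> card {0..<k}" by (intro card_mono) auto
  then show ?thesis by (simp add: cdist_def)
qed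

lemma conf_node:
  assumes "rs \<noteq> []" "node k ol rs = (j, f)" "i < k" "i \<in> set (take j (occ k ol rs))"
  shows "conf k s0 ol rs i = f i"
proof -
  obtain rs0 r0 where rs: "rs = rs0 @ [r0]" using assms(1) by (cases rs rule: rev_exhaust) auto
  show ?thesis using assms unfolding rs by (simp add: newc_def)
qed

lemma cost_step:
  assumes k: "k \<ge> 1"
  shows "cdist k (conf k s0 ol rs) (conf k s0 ol (rs @ [r])) \<le>
     Phi k ol (rs @ [r]) - Phi k ol rs + 2 * k * (if Ev k ol rs r then 1 else 0)"
proof (cases "Ev k ol rs r")
  case True
  have "cdist k (conf k s0 ol rs) (conf k s0 ol (rs @ [r])) \<le> k" by (rule cdist_le)
  then show ?thesis using True Phi_bounds[OF k, of ol rs] Phi_bounds[OF k, of ol "rs @ [r]"]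
    by (simp del: conf_snoc)
next
  case False
  then have ne: "rs \<noteq> []" and al: "alive k (phase k rs @ [r]) \<noteq> {}"
    and oc: "occ k ol (rs @ [r]) = occ k ol rs" by (auto simp: Ev_def)
  have ph: "phase k (rs @ [r]) = phase k rs @ [r]" using al by (simp add: phase_snoc nphase_def)
  let ?s = "occ k ol rs"
  obtain j f where nd: "node k ol rs = (j, f)" by (cases "node k ol rs")
  obtain j' f' where nd': "node k ol (rs @ [r]) = (j', f')" by (cases "node k ol (rs @ [r])")
  have rr: "run ?s (phase k rs) = Some (j, f)" using node_run[OF k] nd by simp
  have rr': "sstep ?s r (Some (j, f)) = Some (j', f')"
    using node_run[OF k, of ol "rs @ [r]"] nd' ph oc rr by simp
  let ?c = "conf k s0 ol rs" and ?c' = "conf k s0 ol (rs @ [r])"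
  have c'eq: "?c' i = (if i \<in> set (take j' ?s) then f' i else ?c i)" if "i < k" for i
    using that nd' oc by (simp add: newc_def)
  have cf: "?c i = f i" if "i < k" "i \<in> set (take j ?s)" for i
    using conf_node[OF ne nd that] .
  show ?thesis
  proof (cases "\<exists>l<j. r (?s!l) = f (?s!l)")
    case True
    then have "j' = j" "f' = f" using rr' by (auto simp: sstep_def)
    then have "{i. i < k \<and> ?c i \<noteq> ?c' i} = {}" using c'eq cf by auto
    then show ?thesis using False nd nd' \<open>j' = j\<close> by (simp add: cdist_def Phi_def)
  next
    case nserv: False
    then have jj: "j < length ?s" "j' = Suc j" "f' = f(?s!j := r (?s!j))"
      using rr' by (auto simp: sstep_def split: if_splits)
    have st: "set (take j' ?s) = insert (?s!j) (set (take j ?s))"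
      using jj by (simp add: take_Suc_conv_app_nth)
    have "{i. i < k \<and> ?c i \<noteq> ?c' i} \<subseteq> {?s!j}"
    proof
      fix i assume i: "i \<in> {i. i < k \<and> ?c i \<noteq> ?c' i}"
      show "i \<in> {?s!j}"
      proof (rule ccontr)
        assume "i \<notin> {?s!j}"
        then have "i \<noteq> ?s!j" by simp
        then show False using i c'eq[of i] cf[of i] st jj by (auto split: if_splits)
      qed
    qed
    then have "card {i. i < k \<and> ?c i \<noteq> ?c' i} \<le> 1"
      by (metis card.empty card.insert empty_iff finite.intros(1) insert_absorb card_mono finite_insert subset_singletonD order_refl le_numeral_extra(4) One_nat_def card_Suc_eq_finite)
    then show ?thesis using False nd nd' jj by (simp add: cdist_def Phi_def)
  qed
qed



definition sw :: "nat list \<Rightarrow> nat list \<Rightarrow> nat list \<Rightarrow> nat list" where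
  "sw a b x = (if x = a then b else if x = b then a else x)"

lemma sw_sw[simp]: "sw a b (sw a b x) = x" by (simp add: sw_def)

lemma inj_sw: "inj (sw a b)" by (metis injI sw_sw)

definition Cl :: "nat \<Rightarrow> nat list set \<Rightarrow> nat list \<Rightarrow> nat list list set" where
  "Cl k A s = {ol \<in> Perms k. first ol A = s}"

lemma first_in: "A \<subseteq> UU k \<Longrightarrow> A \<noteq> {} \<Longrightarrow> ol \<in> Perms k \<Longrightarrow> first ol A \<in> A"
  using first_mem[of A ol] by (auto simp: Perms_def)

lemma Cl_map:
  assumes A: "A \<subseteq> UU k" and s: "s \<in> A" and s': "s' \<in> A" and ol: "ol \<in> Cl k A s"
  shows "map (sw s s') ol \<in> Cl k A s'"
proof -
  let ?t = "sw s s'"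
  have img: "?t ` UU k = UU k"
  proof
    show "?t ` UU k \<subseteq> UU k" using A s s' by (auto simp: sw_def)
    show "UU k \<subseteq> ?t ` UU k"
    proof
      fix x assume "x \<in> UU k"
      then have "?t x \<in> UU k" using A s s' by (auto simp: sw_def)
      then show "x \<in> ?t ` UU k" by (metis image_eqI sw_sw)
    qed
  qed
  have olP: "ol \<in> Perms k" "first ol A = s" using ol by (auto simp: Cl_def)
  have P: "map ?t ol \<in> Perms k"
    using olP img inj_sw[of s s'] by (auto simp: Perms_def distinct_map inj_on_def)
  have pres: "(\<lambda>x. ?t x \<in> A) = (\<lambda>x. x \<in> A)" using s s' by (auto simp: sw_def)
  have fne: "filter (\<lambda>x. x \<in> A) ol \<noteq> []"
    using first_mem[of A ol] olP s A by (auto simp: Perms_def filter_empty_conv)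
  have "filter (\<lambda>x. x \<in> A) (map ?t ol) = map ?t (filter (\<lambda>x. x \<in> A) ol)"
    by (simp add: filter_map o_def pres)
  then have "first (map ?t ol) A = ?t (first ol A)"
    using fne by (simp add: first_def hd_map)
  also have "\<dots> = s'" using olP by (simp add: sw_def)
  finally show ?thesis using P by (simp add: Cl_def)
qed

lemma Cl_le:
  assumes A: "A \<subseteq> UU k" and s: "s \<in> A" and s': "s' \<in> A"
  shows "card (Cl k A s) \<le> card (Cl k A s')"
proof (rule card_inj_on_le[of "map (sw s s')"])
  show "inj_on (map (sw s s')) (Cl k A s)" using inj_mapI[OF inj_sw] by (auto simp: inj_on_def inj_def)
  show "map (sw s s') ` Cl k A s \<subseteq> Cl k A s'" using Cl_map[OF A s s'] by auto
  show "finite (Cl k A s')" using Perms_finite by (auto simp: Cl_def)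
qed

lemma Cl_UN:
  assumes A: "A \<subseteq> UU k" "B \<subseteq> A" "A \<noteq> {}"
  shows "card {ol \<in> Perms k. first ol A \<in> B} = (\<Sum>s\<in>B. card (Cl k A s))"
proof -
  have fA: "finite A" using A UU_finite finite_subset by blast
  have fB: "finite B" using fA A finite_subset by blast
  have "{ol \<in> Perms k. first ol A \<in> B} = (\<Union>s\<in>B. Cl k A s)" by (auto simp: Cl_def)
  moreover have "card (\<Union>s\<in>B. Cl k A s) = (\<Sum>s\<in>B. card (Cl k A s))"
    by (rule card_UN_disjoint) (use fB A Perms_finite finite_subset in \<open>auto simp: Cl_def\<close>)
  ultimately show ?thesis by simp
qed

lemma Cl_card:
  assumes A: "A \<subseteq> UU k" and s: "s \<in> A"
  shows "card (Cl k A s) * card A = card (Perms k)"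
proof -
  have ne: "A \<noteq> {}" using s by auto
  have "{ol \<in> Perms k. first ol A \<in> A} = Perms k" using first_in[OF A ne] by auto
  then have "card (Perms k) = (\<Sum>s'\<in>A. card (Cl k A s'))" using Cl_UN[OF A order_refl ne] by simp
  also have "\<dots> = (\<Sum>s'\<in>A. card (Cl k A s))"
    by (rule sum.cong) (auto intro: antisym Cl_le[OF A] s)
  finally show ?thesis by simp
qed

lemma count_B:
  assumes A: "A \<subseteq> UU k" "B \<subseteq> A" "A \<noteq> {}"
  shows "card {ol \<in> Perms k. first ol A \<in> B} * card A = card B * card (Perms k)"
proof -
  have "card {ol \<in> Perms k. first ol A \<in> B} * card A = (\<Sum>s\<in>B. card (Cl k A s) * card A)"
    using Cl_UN[OF A] by (simp add: sum_distrib_right)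
  also have "\<dots> = (\<Sum>s\<in>B. card (Perms k))" using Cl_card[OF A(1)] A(2) by (intro sum.cong) auto
  finally show ?thesis by simp
qed



definition psi :: "nat \<Rightarrow> gconf list \<Rightarrow> real" where
  "psi k rs = ln (real (card (alive k (phase k rs))))"

definition LL :: "nat \<Rightarrow> real" where
  "LL k = ln (real (card (UU k)))"

lemma ln_diff_bound:
  fixes a b :: real
  assumes "1 \<le> b" "b \<le> a"
  shows "(a - b) / a \<le> ln a - ln b"
proof -
  have "ln (b / a) \<le> b / a - 1" using assms by (intro ln_le_minus_one) auto
  moreover have "ln (b / a) = ln b - ln a" using assms by (simp add: ln_div)
  moreover have "(a - b) / a = 1 - b / a" using assms by (simp add: field_simps)
  ultimately show ?thesis by linarith
qed

lemma alive_fin: "finite (alive k Q)" using UU_finite by (auto simp: alive_def)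

lemma alive_card: "k \<ge> 1 \<Longrightarrow> 1 \<le> card (alive k (phase k rs))"
  using alive_phase_ne[of k rs] alive_fin[of k] by (simp add: Suc_le_eq card_gt_0_iff)

lemma alive_card_le: "card (alive k Q) \<le> card (UU k)"
  using UU_finite by (intro card_mono) (auto simp: alive_def)

lemma psi_bounds: "k \<ge> 1 \<Longrightarrow> 0 \<le> psi k rs \<and> psi k rs \<le> LL k"
proof -
  assume k: "k \<ge> 1"
  have 1: "(1::real) \<le> card (alive k (phase k rs))" using alive_card[OF k] by simp
  have 2: "real (card (alive k (phase k rs))) \<le> card (UU k)" using alive_card_le by simp
  show ?thesis using 1 2 unfolding psi_def LL_def by (auto intro: ln_ge_zero)
qed

lemma LL_nonneg: "k \<ge> 1 \<Longrightarrow> 0 \<le> LL k"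
  using psi_bounds[of k "[]"] by simp

lemma count_E:
  assumes k: "k \<ge> 1"
  shows "real (card {ol \<in> Perms k. Ev k ol rs r}) \<le> real (card (Perms k)) *
    (psi k rs - psi k (rs @ [r]) + (1 + LL k) * (if rs = [] \<or> alive k (phase k rs @ [r]) = {} then 1 else 0))"
proof (cases "rs = [] \<or> alive k (phase k rs @ [r]) = {}")
  case True
  have "card {ol \<in> Perms k. Ev k ol rs r} \<le> card (Perms k)"
    using Perms_finite by (intro card_mono) auto
  moreover have "0 \<le> psi k rs - psi k (rs @ [r]) + LL k"
    using psi_bounds[OF k, of rs] psi_bounds[OF k, of "rs @ [r]"] by linarith
  ultimately have "real (card {ol \<in> Perms k. Ev k ol rs r}) \<le> real (card (Perms k)) * 1"
    and "real (card (Perms k)) * 1 \<le> real (card (Perms k)) * (psi k rs - psi k (rs @ [r]) + (1 + LL k))"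
    by (simp, intro mult_left_mono, linarith, simp)
  then show ?thesis using True by simp
next
  case False
  let ?A = "alive k (phase k rs)" and ?A' = "alive k (phase k (rs @ [r]))"
  have ph: "phase k (rs @ [r]) = phase k rs @ [r]" using False by (simp add: phase_snoc nphase_def)
  have sub: "?A' \<subseteq> ?A" using ph alive_sub by simp
  have AU: "?A \<subseteq> UU k" by (auto simp: alive_def)
  have Ane: "?A \<noteq> {}" using alive_phase_ne[OF k] .
  have "{ol \<in> Perms k. Ev k ol rs r} \<subseteq> {ol \<in> Perms k. first ol ?A \<in> ?A - ?A'}"
  proof
    fix ol assume ol: "ol \<in> {ol \<in> Perms k. Ev k ol rs r}"
    then have P: "ol \<in> Perms k" and nm: "normo k ol = ol" by (auto simp: normo_def)
    have ev: "occ k ol (rs @ [r]) \<noteq> occ k ol rs" using ol False by (auto simp: Ev_def)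
    have fA: "first ol ?A \<in> ?A" using first_in[OF AU Ane P] .
    have "first ol ?A \<notin> ?A'"
    proof
      assume "first ol ?A \<in> ?A'"
      then have "first ol ?A' = first ol ?A" using first_sub[OF sub] by blast
      then show False using ev nm by (simp add: occ_def)
    qed
    then show "ol \<in> {ol \<in> Perms k. first ol ?A \<in> ?A - ?A'}" using P fA by auto
  qed
  then have c1: "card {ol \<in> Perms k. Ev k ol rs r} \<le> card {ol \<in> Perms k. first ol ?A \<in> ?A - ?A'}"
    using Perms_finite by (intro card_mono) auto
  have c2: "card {ol \<in> Perms k. first ol ?A \<in> ?A - ?A'} * card ?A = card (?A - ?A') * card (Perms k)"
    using count_B[OF AU _ Ane] by blast
  have cd: "card (?A - ?A') = card ?A - card ?A'" using sub alive_fin by (simp add: card_Diff_subset)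
  have a1: "1 \<le> card ?A'" using alive_card[OF k] .
  have a2: "card ?A' \<le> card ?A" using sub alive_fin by (intro card_mono) auto
  let ?a = "real (card ?A)" and ?b = "real (card ?A')" and ?P = "real (card (Perms k))"
  have "card {ol \<in> Perms k. Ev k ol rs r} * card ?A \<le> (card ?A - card ?A') * card (Perms k)"
  proof -
    have "card {ol \<in> Perms k. Ev k ol rs r} * card ?A \<le> card {ol \<in> Perms k. first ol ?A \<in> ?A - ?A'} * card ?A"
      using c1 by (rule mult_le_mono1)
    then show ?thesis using c2[unfolded cd] by linarith
  qed
  then have "real (card {ol \<in> Perms k. Ev k ol rs r} * card ?A) \<le> real ((card ?A - card ?A') * card (Perms k))"
    by (simp only: of_nat_le_iff)
  then have "real (card {ol \<in> Perms k. Ev k ol rs r}) * ?a \<le> (?a - ?b) * ?P"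
    using a2 by (simp add: of_nat_diff)
  then have "real (card {ol \<in> Perms k. Ev k ol rs r}) \<le> ?P * ((?a - ?b) / ?a)"
    using a1 a2 by (simp add: field_simps)
  also have "\<dots> \<le> ?P * (ln ?a - ln ?b)"
    using ln_diff_bound[of ?b ?a] a1 a2 by (intro mult_left_mono) auto
  finally show ?thesis using False by (simp add: psi_def)
qed



definition TL :: "nat \<Rightarrow> gconf \<Rightarrow> nat list list \<Rightarrow> gconf list \<Rightarrow> gconf list" where
  "TL k s0 ol rs = map (\<lambda>j. conf k s0 ol (take (Suc j) rs)) [0..<length rs]"

definition pc :: "nat \<Rightarrow> gconf \<Rightarrow> nat list list \<Rightarrow> gconf list \<Rightarrow> real" where
  "pc k s0 ol rs = path_cost k s0 (TL k s0 ol rs)"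

lemma path_cost_snoc: "path_cost k c (cs @ [x]) = path_cost k c cs + cdist k (last (c # cs)) x"
  by (induction cs arbitrary: c) auto

lemma path_cost_nonneg: "0 \<le> path_cost k c cs"
  by (induction cs arbitrary: c) (auto simp: cdist_def)

lemma TL_snoc: "TL k s0 ol (rs @ [r]) = TL k s0 ol rs @ [conf k s0 ol (rs @ [r])]"
proof -
  have "map (\<lambda>j. conf k s0 ol (take (Suc j) (rs @ [r]))) [0..<length rs] =
        map (\<lambda>j. conf k s0 ol (take (Suc j) rs)) [0..<length rs]"
    by (intro map_cong) auto
  then show ?thesis by (simp add: TL_def)
qed

lemma last_TL: "last (s0 # TL k s0 ol rs) = conf k s0 ol rs"
proof (cases rs rule: rev_exhaust)
  case Nil thus ?thesis by (simp add: TL_def)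
next
  case (snoc rs0 r)
  then show ?thesis by (simp only: TL_snoc) simp
qed

lemma pc_Nil: "pc k s0 ol [] = 0" by (simp add: pc_def TL_def)

lemma pc_snoc: "pc k s0 ol (rs @ [r]) = pc k s0 ol rs + cdist k (conf k s0 ol rs) (conf k s0 ol (rs @ [r]))"
  unfolding pc_def TL_snoc path_cost_snoc last_TL by (simp del: conf_snoc)

fun Rr :: "nat \<Rightarrow> gconf list \<Rightarrow> nat" where
  "Rr k [] = 0"
| "Rr k (r # rrs) = Rr k rrs + (if rrs = [] \<or> alive k (phase k (rev rrs) @ [r]) = {} then 1 else 0)"

definition Rc :: "nat \<Rightarrow> gconf list \<Rightarrow> nat" where
  "Rc k rs = Rr k (rev rs)"

lemma Rc_Nil[simp]: "Rc k [] = 0" by (simp add: Rc_def)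
lemma Rc_snoc: "Rc k (rs @ [r]) = Rc k rs + (if rs = [] \<or> alive k (phase k rs @ [r]) = {} then 1 else 0)"
  by (simp add: Rc_def)

lemma Rc_single[simp]: "Rc k [r] = 1" by (simp add: Rc_def)

lemma node_Nil: "fst (node k ol []) = 0" by (simp add: node_def)

lemma alive_Nil: "alive k [] = UU k" by (auto simp: alive_def)

lemma sum_main:
  assumes k: "k \<ge> 1"
  shows "(\<Sum>ol\<in>Perms k. pc k s0 ol rs - Phi k ol rs) \<le>
     real (card (Perms k)) * (2 * k) * (LL k - psi k rs + (1 + LL k) * Rc k rs)"
proof (induction rs rule: rev_induct)
  case Nil
  then show ?case by (simp add: pc_Nil Phi_def node_Nil psi_def LL_def alive_Nil)
next
  case (snoc r rs)
  let ?F = "(if rs = [] \<or> alive k (phase k rs @ [r]) = {} then 1 else 0) :: real"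
  let ?P = "real (card (Perms k))"
  have "(\<Sum>ol\<in>Perms k. pc k s0 ol (rs @ [r]) - Phi k ol (rs @ [r])) =
        (\<Sum>ol\<in>Perms k. (pc k s0 ol rs - Phi k ol rs) +
           (cdist k (conf k s0 ol rs) (conf k s0 ol (rs @ [r])) - (Phi k ol (rs @ [r]) - Phi k ol rs)))"
    by (intro sum.cong) (auto simp: pc_snoc simp del: conf_snoc)
  also have "\<dots> = (\<Sum>ol\<in>Perms k. pc k s0 ol rs - Phi k ol rs) +
      (\<Sum>ol\<in>Perms k. cdist k (conf k s0 ol rs) (conf k s0 ol (rs @ [r])) - (Phi k ol (rs @ [r]) - Phi k ol rs))"
    by (rule sum.distrib)
  also have "(\<Sum>ol\<in>Perms k. cdist k (conf k s0 ol rs) (conf k s0 ol (rs @ [r])) - (Phi k ol (rs @ [r]) - Phi k ol rs))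
      \<le> (\<Sum>ol\<in>Perms k. 2 * real k * of_bool (Ev k ol rs r))"
  proof (intro sum_mono)
    fix ol
    have h: "cdist k (conf k s0 ol rs) (conf k s0 ol (rs @ [r])) \<le>
     Phi k ol (rs @ [r]) - Phi k ol rs + 2 * k * (if Ev k ol rs r then 1 else 0)"
      by (rule cost_step[OF k])
    show "cdist k (conf k s0 ol rs) (conf k s0 ol (rs @ [r])) - (Phi k ol (rs @ [r]) - Phi k ol rs)
      \<le> 2 * real k * of_bool (Ev k ol rs r)"
      using h by (cases "Ev k ol rs r") (simp_all del: conf_snoc)
  qed
  also have "\<dots> = 2 * real k * real (card {ol \<in> Perms k. Ev k ol rs r})"
    using Perms_finite by (simp add: sum_distrib_left[symmetric] Int_def)
  also have "\<dots> \<le> 2 * real k * (?P * (psi k rs - psi k (rs @ [r]) + (1 + LL k) * ?F))"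
    using count_E[OF k, of rs r] by (intro mult_left_mono) auto
  finally have "(\<Sum>ol\<in>Perms k. pc k s0 ol (rs @ [r]) - Phi k ol (rs @ [r])) \<le>
      ?P * (2 * k) * (LL k - psi k rs + (1 + LL k) * Rc k rs) +
      2 * real k * (?P * (psi k rs - psi k (rs @ [r]) + (1 + LL k) * ?F))"
    using snoc by linarith
  also have "\<dots> = ?P * (2 * k) * (LL k - psi k (rs @ [r]) + (1 + LL k) * Rc k (rs @ [r]))"
    by (simp add: Rc_snoc algebra_simps)
  finally show ?case .
qed

lemma cdist_zero: "cdist k y x = 0 \<Longrightarrow> i < k \<Longrightarrow> y i = x i"
  unfolding cdist_def by auto

lemma cdist_ge1:
  assumes "cdist k y x \<noteq> 0" shows "1 \<le> cdist k y x"
proof -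
  obtain m where m: "cdist k y x = real m" by (simp add: cdist_def)
  then show ?thesis using assms by simp
qed

lemma serves_agree: "cdist k y x = 0 \<Longrightarrow> serves k q y \<Longrightarrow> serves k q x"
  unfolding serves_def using cdist_zero by metis

lemma opt_R:
  assumes k: "k \<ge> 1"
  shows "length cs = length rs \<Longrightarrow> (\<forall>t<length rs. serves k (rs!t) (cs!t)) \<Longrightarrow>
    real (Rc k rs) + (if \<forall>q\<in>set (phase k rs). serves k q (last (s0 # cs)) then 0 else 1) \<le> path_cost k s0 cs + 1"
proof (induction rs arbitrary: cs rule: rev_induct)
  case Nil thus ?case by simp
next
  case (snoc r rs)
  obtain cs0 x where cs: "cs = cs0 @ [x]" using snoc.prems(1) by (cases cs rule: rev_exhaust) auto
  have len: "length cs0 = length rs" using snoc.prems(1) cs by simp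
  have sv: "\<forall>t<length rs. serves k (rs!t) (cs0!t)"
  proof (intro allI impI)
    fix t assume "t < length rs"
    then show "serves k (rs!t) (cs0!t)" using snoc.prems(2)[rule_format, of t] cs len by (simp add: nth_append)
  qed
  have xr: "serves k r x" using snoc.prems(2)[rule_format, of "length rs"] cs len by (simp add: nth_append)
  let ?y = "last (s0 # cs0)"
  let ?D = "(if \<forall>q\<in>set (phase k rs). serves k q ?y then 0 else 1) :: real"
  have IH: "real (Rc k rs) + ?D \<le> path_cost k s0 cs0 + 1" using snoc.IH[OF len sv] .
  have pc: "path_cost k s0 cs = path_cost k s0 cs0 + cdist k ?y x" using cs path_cost_snoc by simp
  have lx: "last (s0 # cs) = x" using cs by simp
  have cd0: "0 \<le> cdist k ?y x" by (simp add: cdist_def)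
  have pc0: "0 \<le> path_cost k s0 cs0" by (rule path_cost_nonneg)
  show ?case
  proof (cases "rs = []")
    case True
    have "phase k (rs @ [r]) = [r]" using True by (simp add: phase_def nphase_def)
    then show ?thesis using True xr lx pc cd0 pc0 by (simp add: Rc_snoc)
  next
    case ne: False
    show ?thesis
    proof (cases "alive k (phase k rs @ [r]) = {}")
      case True
      have ph: "phase k (rs @ [r]) = [r]" using True by (simp add: phase_snoc nphase_def)
      have "real (Rc k rs) + 1 \<le> path_cost k s0 cs0 + cdist k ?y x + 1"
      proof (cases "\<forall>q\<in>set (phase k rs). serves k q ?y")
        case yes: True
        have "cdist k ?y x \<noteq> 0"
        proof
          assume "cdist k ?y x = 0"
          then have "\<forall>q\<in>set (phase k rs @ [r]). serves k q x" using yes xr serves_agree by auto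
          then show False using ex_alive True by blast
        qed
        then show ?thesis using IH yes cdist_ge1 by fastforce
      next
        case False
        then have "?D = 1" by simp
        then show ?thesis using IH cd0 by linarith
      qed
      then show ?thesis using ph xr lx pc True ne by (simp add: Rc_snoc)
    next
      case False
      have ph: "phase k (rs @ [r]) = phase k rs @ [r]" using False by (simp add: phase_snoc nphase_def)
      have "real (Rc k rs) + (if \<forall>q\<in>set (phase k rs @ [r]). serves k q x then 0 else 1)
          \<le> path_cost k s0 cs0 + cdist k ?y x + 1"
      proof (cases "cdist k ?y x = 0")
        case True
        then have "(if \<forall>q\<in>set (phase k rs @ [r]). serves k q x then 0 else 1) \<le> ?D"
          using serves_agree[OF True] xr by auto
        then show ?thesis using IH True by linarith
      next
        case c1: False
        have "1 \<le> cdist k ?y x" using cdist_ge1[OF c1] .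
        moreover have "?D \<ge> 0" by simp
        moreover have "(if \<forall>q\<in>set (phase k rs @ [r]). serves k q x then 0 else 1) \<le> (1::real)" by simp
        ultimately show ?thesis using IH by linarith
      qed
      then show ?thesis using ph lx pc False ne by (simp add: Rc_snoc)
    qed
  qed
qed



lemma opt_ge:
  assumes k: "k \<ge> 1" and v: "\<forall>r\<in>set rs. valid_conf k n r"
  shows "real (Rc k rs) - 1 \<le> opt_cost k n s0 rs \<and> 0 \<le> opt_cost k n s0 rs"
proof -
  let ?S = "{path_cost k s0 cs | cs. length cs = length rs \<and>
      (\<forall>t<length rs. valid_conf k n (cs ! t) \<and> serves k (rs ! t) (cs ! t))}"
  have "\<forall>t<length rs. valid_conf k n (rs ! t) \<and> serves k (rs ! t) (rs ! t)"
  proof (intro allI impI conjI)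
    fix t assume "t < length rs"
    then show "valid_conf k n (rs ! t)" using v nth_mem by blast
    show "serves k (rs ! t) (rs ! t)" using k unfolding serves_def by (intro exI[of _ 0]) auto
  qed
  then have ne: "?S \<noteq> {}" by blast
  have b1: "real (Rc k rs) - 1 \<le> x" if "x \<in> ?S" for x
  proof -
    from that obtain cs where cs: "x = path_cost k s0 cs" "length cs = length rs"
      "\<forall>t<length rs. serves k (rs ! t) (cs ! t)" by blast
    have "real (Rc k rs) + (if \<forall>q\<in>set (phase k rs). serves k q (last (s0 # cs)) then 0 else 1) \<le> path_cost k s0 cs + 1"
      using opt_R[OF k cs(2) cs(3)] .
    moreover have "(0::real) \<le> (if \<forall>q\<in>set (phase k rs). serves k q (last (s0 # cs)) then 0 else 1)" by simp
    ultimately show ?thesis using cs(1) by linarith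
  qed
  have b2: "0 \<le> x" if "x \<in> ?S" for x using that path_cost_nonneg by auto
  show ?thesis unfolding opt_cost_def
    using cInf_greatest[OF ne b1] cInf_greatest[OF ne b2] by blast
qed

lemma alg_cost_eq:
  "alg_cost k s0 (Alg k s0) rs = (\<Sum>ol\<in>Perms k. pc k s0 ol rs) / real (card (Perms k))"
proof -
  have "alg_cost k s0 (Alg k s0) rs =
    measure_pmf.expectation (map_pmf (\<lambda>ol. TL k s0 ol rs) (pmf_of_set (Perms k))) (path_cost k s0)"
    unfolding alg_cost_def using traj_Alg[of "length rs" rs k s0] by (simp add: TL_def)
  also have "\<dots> = measure_pmf.expectation (pmf_of_set (Perms k)) (\<lambda>ol. pc k s0 ol rs)"
    by (simp add: pc_def)
  also have "\<dots> = (\<Sum>ol\<in>Perms k. pc k s0 ol rs) / real (card (Perms k))"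
    by (rule integral_pmf_of_set[OF Perms_ne Perms_finite])
  finally show ?thesis .
qed

lemma ln2_half: "1/2 \<le> ln (2::real)"
proof -
  have "ln (1/2::real) \<le> 1/2 - 1" by (rule ln_le_minus_one) simp
  moreover have "ln (1/2::real) = - ln 2" by (simp add: ln_div)
  ultimately show ?thesis by simp
qed

lemma LL_le: assumes k: "k \<ge> 1" shows "LL k \<le> real k * ln (real k)"
proof -
  have c1: "1 \<le> real (card (UU k))" using UU_finite UU_ne[of k]
    by (metis One_nat_def Suc_leI card_gt_0_iff empty_iff of_nat_1 of_nat_le_iff)
  have "real (card (UU k)) \<le> real (k ^ k)" using UU_card[of k] by (simp only: of_nat_le_iff)
  then have c2: "real (card (UU k)) \<le> real k ^ k" by simp
  have "ln (real (card (UU k))) \<le> ln (real k ^ k)"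
    using c1 c2 by (subst ln_le_cancel_iff) auto
  also have "\<dots> = real k * ln (real k)" by (simp add: ln_realpow)
  finally show ?thesis by (simp add: LL_def)
qed

theorem corollary7:
  shows "\<exists>C::real. \<forall>k::nat. k \<ge> 2 \<longrightarrow> (\<forall>n::nat \<Rightarrow> nat. (\<forall>i<k. n i \<ge> 2) \<longrightarrow>
           (\<forall>s0. valid_conf k n s0 \<longrightarrow>
              (\<exists>A. online_alg k n A \<and> competitive k n s0 A (C * real k ^ 2 * ln (real k)))))"
proof (intro exI[of _ 4] allI impI)
  fix k :: nat and n :: "nat \<Rightarrow> nat" and s0
  assume k2: "k \<ge> 2" and nn: "\<forall>i<k. n i \<ge> 2" and v0: "valid_conf k n s0"
  have k: "k \<ge> 1" using k2 by simp
  let ?a = "2 * real k * (1 + LL k)"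
  let ?g = "real k + 2 * real k * LL k + ?a"
  have LL0: "0 \<le> LL k" using LL_nonneg[OF k] .
  have "ln 2 \<le> ln (real k)" using k2 by (subst ln_le_cancel_iff) auto
  then have lnk: "1/2 \<le> ln (real k)" using ln2_half by linarith
  have "1 \<le> real k * ln (real k)"
  proof -
    have "real 2 * (1/2) \<le> real k * ln (real k)"
      using k2 lnk by (intro mult_mono) auto
    then show ?thesis by simp
  qed
  then have e2: "2 * real k * 1 \<le> 2 * real k * (real k * ln (real k))"
    by (intro mult_left_mono) auto
  have e1: "2 * real k * LL k \<le> 2 * real k * (real k * ln (real k))"
    using LL_le[OF k] by (intro mult_left_mono) auto
  have e3: "?a = 2 * real k * 1 + 2 * real k * LL k" by (simp add: algebra_simps)
  have e4: "4 * real k ^ 2 * ln (real k) = 2 * (2 * real k * (real k * ln (real k)))"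
    by (simp add: power2_eq_square algebra_simps)
  have aB: "?a \<le> 4 * real k ^ 2 * ln (real k)"
    using e1 e2 e3 e4 by linarith
  show "\<exists>A. online_alg k n A \<and> competitive k n s0 A (4 * real k ^ 2 * ln (real k))"
  proof (intro exI[of _ "Alg k s0"] conjI)
    show "online_alg k n (Alg k s0)" using Alg_online[OF k v0] .
    show "competitive k n s0 (Alg k s0) (4 * real k ^ 2 * ln (real k))"
      unfolding competitive_def
    proof (intro exI[of _ ?g] allI impI)
      fix rs assume v: "\<forall>r\<in>set rs. valid_conf k n r"
      let ?P = "real (card (Perms k))"
      have P0: "0 < ?P" using Perms_finite Perms_ne by (simp add: card_gt_0_iff)
      have s1: "(\<Sum>ol\<in>Perms k. pc k s0 ol rs - Phi k ol rs) \<le>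
         ?P * (2 * k) * (LL k - psi k rs + (1 + LL k) * Rc k rs)" using sum_main[OF k] .
      have s2: "(\<Sum>ol\<in>Perms k. Phi k ol rs) \<le> ?P * k"
        using sum_mono[of "Perms k" "\<lambda>ol. Phi k ol rs" "\<lambda>_. real k"] Phi_bounds[OF k] by auto
      have ps: "0 \<le> psi k rs" using psi_bounds[OF k] by auto
      have "(\<Sum>ol\<in>Perms k. pc k s0 ol rs) = (\<Sum>ol\<in>Perms k. pc k s0 ol rs - Phi k ol rs) + (\<Sum>ol\<in>Perms k. Phi k ol rs)"
        by (simp add: sum_subtractf)
      also have "\<dots> \<le> ?P * (2 * k) * (LL k - psi k rs + (1 + LL k) * Rc k rs) + ?P * k"
        using s1 s2 by linarith
      also have "\<dots> \<le> ?P * (2 * k) * (LL k + (1 + LL k) * Rc k rs) + ?P * k"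
        using ps P0 by (intro add_right_mono mult_left_mono) auto
      finally have "(\<Sum>ol\<in>Perms k. pc k s0 ol rs) / ?P \<le> (2 * k) * (LL k + (1 + LL k) * Rc k rs) + k"
        using P0 by (simp add: divide_le_eq algebra_simps)
      then have alg: "alg_cost k s0 (Alg k s0) rs \<le> 2 * real k * LL k + ?a * Rc k rs + k"
        unfolding alg_cost_eq by (simp add: algebra_simps)
      have opt: "real (Rc k rs) - 1 \<le> opt_cost k n s0 rs" "0 \<le> opt_cost k n s0 rs"
        using opt_ge[OF k v] by auto
      have a0: "0 \<le> ?a" using LL0 by simp
      have "?a * Rc k rs \<le> ?a * (opt_cost k n s0 rs + 1)"
        using opt a0 by (intro mult_left_mono) auto
      moreover have "?a * opt_cost k n s0 rs \<le> 4 * real k ^ 2 * ln (real k) * opt_cost k n s0 rs"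
        using aB opt(2) by (intro mult_right_mono) auto
      ultimately show "alg_cost k s0 (Alg k s0) rs \<le> 4 * real k ^ 2 * ln (real k) * opt_cost k n s0 rs + ?g"
        using alg by (simp add: algebra_simps)
    qed
  qed
qed

end
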